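(* Let a blockchain computation contain a network split, and let $B_1$ and $B_2$ be branches of the global blockchain tree mined in the two different partitions created by the split. If $B_1$ and $B_2$ have their accounts split on the same seed block, then $B_1$ and $B_2$ are mergeable.
   Context: Peers communicate by message passing; a partition is a set of peers that can communicate. A network split is an action that separates the network into two nonempty partitions; after it, messages are delivered only within the sender's partition. Peers mine transactions into blocks (one transaction per block); each block links to one earlier block, so the collection of all mined blocks (the global blockchain) is a tree rooted at a unique genesis block. A branch is a chain of blocks from the genesis to a leaf. A transaction transfers funds from one source account to one target account. The balance of an account $a$ with respect to a block $b$ is the total of funds transferred into $a$ minus the total transferred out of $a$ by the transactions on the chain from the genesis to $b$. A transaction is valid (with respect to a chain) if applying it leaves the source account with nonnegative balance. A seed is the last block mined on a branch before the split. At a split, the accounts are split in a seed: each account's balance at the seed is divided between the two partitions into nonnegative shares summing to the balance at the seed, and post-split blocks in each partition are validated against that partition's share. A transaction is confirmed if it lies on a permanent (infinite) branch and rejected otherwise. A branch merge of two branches is an arbitrary interleaving of their transactions that preserves the order of transactions of each branch. Two branches are mergeable if all transactions mined before the split are resolved (confirmed/rejected) identically by both, and every branch merge of them keeps every transaction of the two branches valid. *)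

theory Defs
  imports Complex_Main
begin

text \<open>
  Every non-genesis block carries exactly
  one transaction (source, target, amount); a transaction is identified with the
  block that mines it.  The genesis block carries the initial allocation init.
  The blocks mined before the split form the set pre; every block mined after the
  split is mined in partition side b (1 or 2).
\<close>

record ('b, 'a) comp =
  blocks  :: "'b set"
  genesis :: 'b
  parent  :: "'b \<Rightarrow> 'b"
  src     :: "'b \<Rightarrow> 'a"
  tgt     :: "'b \<Rightarrow> 'a"
  amt     :: "'b \<Rightarrow> real"
  init    :: "'a \<Rightarrow> real"
  pre     :: "'b set"
  side    :: "'b \<Rightarrow> nat"
  share   :: "'b \<Rightarrow> nat \<Rightarrow> 'a \<Rightarrow> real"

definition edges :: "('b, 'a, 'c) comp_scheme \<Rightarrow> ('b \<times> 'b) set" where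
  "edges C = {(parent C b, b) | b. b \<in> blocks C \<and> b \<noteq> genesis C}"

definition anc :: "('b, 'a, 'c) comp_scheme \<Rightarrow> 'b \<Rightarrow> 'b \<Rightarrow> bool" where
  "anc C x y \<longleftrightarrow> (x, y) \<in> (edges C)\<^sup>*"

definition delta :: "('b, 'a, 'c) comp_scheme \<Rightarrow> 'b \<Rightarrow> 'a \<Rightarrow> real" where
  "delta C y a = (if tgt C y = a then amt C y else 0) - (if src C y = a then amt C y else 0)"

definition bal :: "('b, 'a, 'c) comp_scheme \<Rightarrow> 'b \<Rightarrow> 'a \<Rightarrow> real" where
  "bal C b a = init C a + (\<Sum>y\<in>{y. anc C y b} - {genesis C}. delta C y a)"

definition is_seed :: "('b, 'a, 'c) comp_scheme \<Rightarrow> 'b \<Rightarrow> 'b \<Rightarrow> bool" where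
  "is_seed C s b \<longleftrightarrow> s \<in> pre C \<and> anc C s b \<and> (\<forall>y. anc C y b \<and> y \<in> pre C \<longrightarrow> anc C y s)"

definition split_comp :: "('b, 'a, 'c) comp_scheme \<Rightarrow> bool" where
  "split_comp C \<longleftrightarrow>
     \<comment> \<open>the global blockchain is a tree rooted at the unique genesis block\<close>
     genesis C \<in> blocks C \<and>
     (\<forall>b \<in> blocks C - {genesis C}. parent C b \<in> blocks C) \<and>
     (\<forall>b \<in> blocks C. anc C (genesis C) b) \<and>
     \<comment> \<open>amounts and initial allocation are nonnegative\<close>
     (\<forall>b \<in> blocks C - {genesis C}. 0 \<le> amt C b) \<and>
     (\<forall>a. 0 \<le> init C a) \<and>
     \<comment> \<open>pre-split blocks: contain genesis, closed under parents\<close>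
     pre C \<subseteq> blocks C \<and> genesis C \<in> pre C \<and>
     (\<forall>b \<in> pre C - {genesis C}. parent C b \<in> pre C) \<and>
     \<comment> \<open>post-split blocks are mined in one of the two partitions and extend a block
        that is either pre-split or mined in the same partition\<close>
     (\<forall>b \<in> blocks C - pre C. side C b \<in> {1, 2} \<and>
        (parent C b \<in> pre C \<or> side C (parent C b) = side C b)) \<and>
     \<comment> \<open>pre-split transactions are valid w.r.t. their chain\<close>
     (\<forall>b \<in> pre C - {genesis C}. 0 \<le> bal C b (src C b)) \<and>
     \<comment> \<open>accounts are split in every seed: nonnegative shares summing to the balance\<close>
     (\<forall>s. (\<exists>b \<in> blocks C - pre C. is_seed C s b) \<longrightarrow>
        (\<forall>a. 0 \<le> share C s 1 a \<and> 0 \<le> share C s 2 a \<and>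
             share C s 1 a + share C s 2 a = bal C s a)) \<and>
     \<comment> \<open>post-split transactions are valid w.r.t. the partition's share in the seed\<close>
     (\<forall>b \<in> blocks C - pre C. \<forall>s. is_seed C s b \<longrightarrow>
        0 \<le> share C s (side C b) (src C b) +
             (\<Sum>y\<in>{y. anc C y b} - pre C. delta C y (src C b)))"

text \<open>A branch: a maximal chain from the genesis (finite ending in a leaf, or infinite).\<close>
definition is_branch :: "('b, 'a, 'c) comp_scheme \<Rightarrow> 'b set \<Rightarrow> bool" where
  "is_branch C B \<longleftrightarrow> B \<subseteq> blocks C \<and> genesis C \<in> B \<and>
     (\<forall>b \<in> B - {genesis C}. parent C b \<in> B) \<and>
     (\<forall>x \<in> B. \<forall>y \<in> B. anc C x y \<or> anc C y x) \<and>
     (infinite B \<or> (\<exists>l \<in> B. \<forall>c \<in> blocks C - {genesis C}. parent C c \<noteq> l))"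

definition mined_in_partition :: "('b, 'a, 'c) comp_scheme \<Rightarrow> nat \<Rightarrow> 'b set \<Rightarrow> bool" where
  "mined_in_partition C p B \<longleftrightarrow> (\<exists>b \<in> B. b \<notin> pre C) \<and> (\<forall>b \<in> B - pre C. side C b = p)"

definition branch_seed :: "('b, 'a, 'c) comp_scheme \<Rightarrow> 'b set \<Rightarrow> 'b \<Rightarrow> bool" where
  "branch_seed C B s \<longleftrightarrow> s \<in> B \<and> s \<in> pre C \<and> (\<forall>y \<in> B \<inter> pre C. anc C y s)"

text \<open>A branch merge of B1 and B2: a strict total order R on the transactions of both
  branches (common blocks occur once) preserving the order within each branch, in which
  every transaction has only finitely many predecessors (an interleaving of sequences).\<close>
definition is_branch_merge :: "('b, 'a, 'c) comp_scheme \<Rightarrow> 'b set \<Rightarrow> 'b set \<Rightarrow> ('b \<times> 'b) set \<Rightarrow> bool" where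
  "is_branch_merge C B1 B2 R \<longleftrightarrow>
     R \<subseteq> (B1 \<union> B2) \<times> (B1 \<union> B2) \<and> trans R \<and> irrefl R \<and> total_on (B1 \<union> B2) R \<and>
     (\<forall>x \<in> B1. \<forall>y \<in> B1. anc C x y \<and> x \<noteq> y \<longrightarrow> (x, y) \<in> R) \<and>
     (\<forall>x \<in> B2. \<forall>y \<in> B2. anc C x y \<and> x \<noteq> y \<longrightarrow> (x, y) \<in> R) \<and>
     (\<forall>y. finite {x. (x, y) \<in> R})"

text \<open>Balance of account a in the merge R right after applying transaction x.\<close>
definition merge_bal :: "('b, 'a, 'c) comp_scheme \<Rightarrow> ('b \<times> 'b) set \<Rightarrow> 'b \<Rightarrow> 'a \<Rightarrow> real" where
  "merge_bal C R x a = init C a + (\<Sum>y\<in>(insert x {y. (y, x) \<in> R}) - {genesis C}. delta C y a)"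

definition mergeable :: "('b, 'a, 'c) comp_scheme \<Rightarrow> 'b set \<Rightarrow> 'b set \<Rightarrow> bool" where
  "mergeable C B1 B2 \<longleftrightarrow>
     (\<forall>t \<in> pre C - {genesis C}. t \<in> B1 \<longleftrightarrow> t \<in> B2) \<and>
     (\<forall>R. is_branch_merge C B1 B2 R \<longrightarrow>
        (\<forall>x \<in> (B1 \<union> B2) - {genesis C}. 0 \<le> merge_bal C R x (src C x)))"

end

theory Submission
  imports Defs
begin

lemma edge_iff: "(x,y) \<in> edges C \<longleftrightarrow> y \<in> blocks C \<and> y \<noteq> genesis C \<and> x = parent C y"
  unfolding edges_def by auto

lemma anc_refl: "anc C x x" unfolding anc_def by simp

lemma anc_trans: "anc C x y \<Longrightarrow> anc C y z \<Longrightarrow> anc C x z"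
  unfolding anc_def by simp

lemma anc_parent: "y \<in> blocks C \<Longrightarrow> y \<noteq> genesis C \<Longrightarrow> anc C (parent C y) y"
  unfolding anc_def by (simp add: edge_iff r_into_rtrancl)

lemma anc_back: "anc C x y \<Longrightarrow> x = y \<or> (y \<in> blocks C \<and> y \<noteq> genesis C \<and> anc C x (parent C y))"
  unfolding anc_def by (erule rtranclE) (auto simp: edge_iff)

lemma anc_closed:
  assumes "anc C x y" "y \<in> S" "\<forall>b\<in>S - {genesis C}. parent C b \<in> S"
  shows "x \<in> S"
proof -
  have "(x,y) \<in> (edges C)\<^sup>*" using assms(1) unfolding anc_def .
  then show ?thesis using assms(2)
  proof (induction rule: rtrancl_induct)
    case base then show ?case .
  next
    case (step y z) then show ?case using assms(3) by (auto simp: edge_iff)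
  qed
qed

lemma acyclic_aux:
  assumes "(genesis C, b) \<in> (edges C)\<^sup>*"
  shows "(b,b) \<notin> (edges C)\<^sup>+"
  using assms
proof (induction rule: rtrancl_induct)
  case base
  show ?case
  proof
    assume "(genesis C, genesis C) \<in> (edges C)\<^sup>+"
    then show False by (rule tranclE) (auto simp: edge_iff)
  qed
next
  case (step y z)
  show ?case
  proof
    assume "(z,z) \<in> (edges C)\<^sup>+"
    then obtain w where w: "(z,w) \<in> (edges C)\<^sup>*" "(w,z) \<in> edges C"
      by (meson tranclD2)
    have "w = y" using w(2) step(2) by (auto simp: edge_iff)
    then have "(y,y) \<in> (edges C)\<^sup>+" using w step(2)
      by (meson rtrancl_into_trancl2)
    then show False using step(3) by simp
  qed
qed

lemma sc:
  assumes "split_comp C"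
  shows sc1: "genesis C \<in> blocks C"
    and sc2: "\<And>b. b \<in> blocks C \<Longrightarrow> b \<noteq> genesis C \<Longrightarrow> parent C b \<in> blocks C"
    and sc3: "\<And>b. b \<in> blocks C \<Longrightarrow> anc C (genesis C) b"
    and sc4: "\<And>b. b \<in> blocks C \<Longrightarrow> b \<noteq> genesis C \<Longrightarrow> 0 \<le> amt C b"
    and sc5: "\<And>a. 0 \<le> init C a"
    and sc6: "pre C \<subseteq> blocks C" and sc7: "genesis C \<in> pre C"
    and sc8: "\<forall>b \<in> pre C - {genesis C}. parent C b \<in> pre C"
    and sc9: "\<And>b. b \<in> blocks C \<Longrightarrow> b \<notin> pre C \<Longrightarrow> side C b \<in> {1,2}"
    and sc10: "\<And>b. b \<in> blocks C \<Longrightarrow> b \<notin> pre C \<Longrightarrow> parent C b \<in> pre C \<or> side C (parent C b) = side C b"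
    and sc11: "\<And>b. b \<in> pre C \<Longrightarrow> b \<noteq> genesis C \<Longrightarrow> 0 \<le> bal C b (src C b)"
    and sc12: "\<And>s b a. b \<in> blocks C \<Longrightarrow> b \<notin> pre C \<Longrightarrow> is_seed C s b \<Longrightarrow>
        0 \<le> share C s 1 a \<and> 0 \<le> share C s 2 a \<and> share C s 1 a + share C s 2 a = bal C s a"
    and sc13: "\<And>s b. b \<in> blocks C \<Longrightarrow> b \<notin> pre C \<Longrightarrow> is_seed C s b \<Longrightarrow>
        0 \<le> share C s (side C b) (src C b) + (\<Sum>y\<in>{y. anc C y b} - pre C. delta C y (src C b))"
proof -
  note H = assms[unfolded split_comp_def]
  show "genesis C \<in> blocks C" using H by (elim conjE)
  show "\<And>b. b \<in> blocks C \<Longrightarrow> b \<noteq> genesis C \<Longrightarrow> parent C b \<in> blocks C" using H by (elim conjE) auto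
  show "\<And>b. b \<in> blocks C \<Longrightarrow> anc C (genesis C) b" using H by (elim conjE) auto
  show "\<And>b. b \<in> blocks C \<Longrightarrow> b \<noteq> genesis C \<Longrightarrow> 0 \<le> amt C b" using H by (elim conjE) auto
  show "\<And>a. 0 \<le> init C a" using H by (elim conjE) auto
  show "pre C \<subseteq> blocks C" using H by (elim conjE)
  show "genesis C \<in> pre C" using H by (elim conjE)
  show "\<forall>b \<in> pre C - {genesis C}. parent C b \<in> pre C" using H by (elim conjE)
  show "\<And>b. b \<in> blocks C \<Longrightarrow> b \<notin> pre C \<Longrightarrow> side C b \<in> {1,2}" using H by (elim conjE) (meson DiffI)
  show "\<And>b. b \<in> blocks C \<Longrightarrow> b \<notin> pre C \<Longrightarrow> parent C b \<in> pre C \<or> side C (parent C b) = side C b" using H by (elim conjE) (meson DiffI)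
  show "\<And>b. b \<in> pre C \<Longrightarrow> b \<noteq> genesis C \<Longrightarrow> 0 \<le> bal C b (src C b)" using H by (elim conjE) (meson DiffI singletonD)
  show "\<And>s b a. b \<in> blocks C \<Longrightarrow> b \<notin> pre C \<Longrightarrow> is_seed C s b \<Longrightarrow>
        0 \<le> share C s 1 a \<and> 0 \<le> share C s 2 a \<and> share C s 1 a + share C s 2 a = bal C s a"
    using H by (elim conjE) (meson DiffI)
  show "\<And>s b. b \<in> blocks C \<Longrightarrow> b \<notin> pre C \<Longrightarrow> is_seed C s b \<Longrightarrow>
        0 \<le> share C s (side C b) (src C b) + (\<Sum>y\<in>{y. anc C y b} - pre C. delta C y (src C b))"
    using H by (elim conjE) (meson DiffI)
qed

lemma anc_set:
  assumes "split_comp C" "b \<in> blocks C" "b \<noteq> genesis C"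
  shows "{y. anc C y b} = insert b {y. anc C y (parent C b)}" "b \<notin> {y. anc C y (parent C b)}"
proof -
  show "{y. anc C y b} = insert b {y. anc C y (parent C b)}"
  proof (intro set_eqI iffI)
    fix y assume "y \<in> {y. anc C y b}"
    then show "y \<in> insert b {y. anc C y (parent C b)}" using anc_back[of C y b] by auto
  next
    fix y assume "y \<in> insert b {y. anc C y (parent C b)}"
    then show "y \<in> {y. anc C y b}"
      using anc_trans[OF _ anc_parent[OF assms(2,3)], of y] anc_refl[of C b] by auto
  qed
  show "b \<notin> {y. anc C y (parent C b)}"
  proof
    assume "b \<in> {y. anc C y (parent C b)}"
    then have "(b, parent C b) \<in> (edges C)\<^sup>*" by (simp add: anc_def)
    moreover have "(parent C b, b) \<in> edges C" using assms(2,3) by (simp add: edge_iff)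
    ultimately have "(b,b) \<in> (edges C)\<^sup>+" by (rule rtrancl_into_trancl1)
    moreover have "(genesis C, b) \<in> (edges C)\<^sup>*" using sc(3)[OF assms(1,2)] by (simp add: anc_def)
    ultimately show False using acyclic_aux[of C b] by simp
  qed
qed

lemma anc_finite:
  assumes "split_comp C" "b \<in> blocks C"
  shows "finite {y. anc C y b}"
proof -
  have "(genesis C, b) \<in> (edges C)\<^sup>*" using sc(3)[OF assms] by (simp add: anc_def)
  then show ?thesis
  proof (induction rule: rtrancl_induct)
    case base
    have "{y. anc C y (genesis C)} = {genesis C}"
      using anc_back[of C _ "genesis C"] anc_refl[of C "genesis C"] by auto
    then show ?case by simp
  next
    case (step y z)
    then have "z \<in> blocks C" "z \<noteq> genesis C" "y = parent C z" by (auto simp: edge_iff)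
    then show ?case using anc_set(1)[OF assms(1), of z] step(3) by simp
  qed
qed


lemma anc_in_branch:
  assumes "is_branch C B" "anc C y z" "z \<in> B"
  shows "y \<in> B"
proof -
  have "\<forall>b\<in>B - {genesis C}. parent C b \<in> B" using assms(1) unfolding is_branch_def by blast
  then show ?thesis using anc_closed[OF assms(2,3)] by blast
qed

lemma anc_in_pre:
  assumes "split_comp C" "anc C y z" "z \<in> pre C"
  shows "y \<in> pre C"
  using anc_closed[OF assms(2,3) sc8[OF assms(1)]] .

lemma branch_chain:
  assumes "is_branch C B" "y \<in> B" "z \<in> B"
  shows "anc C y z \<or> anc C z y"
proof -
  have "\<forall>x \<in> B. \<forall>y \<in> B. anc C x y \<or> anc C y x" using assms(1) unfolding is_branch_def by blast
  then show ?thesis using assms(2,3) by blast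
qed

lemma branch_blocks:
  assumes "is_branch C B" shows "B \<subseteq> blocks C"
  using assms unfolding is_branch_def by blast

lemma seed_of:
  assumes "split_comp C" "is_branch C B" "branch_seed C B s" "z \<in> B" "z \<notin> pre C"
  shows "is_seed C s z" "anc C s z"
proof -
  have s: "s \<in> B" "s \<in> pre C" "\<And>y. y \<in> B \<Longrightarrow> y \<in> pre C \<Longrightarrow> anc C y s"
    using assms(3) unfolding branch_seed_def by blast+
  show "anc C s z"
  proof -
    from branch_chain[OF assms(2) s(1) assms(4)] show ?thesis
    proof
      assume "anc C z s"
      then have "z \<in> pre C" using anc_in_pre[OF assms(1) _ s(2)] by blast
      then show ?thesis using assms(5) by blast
    qed
  qed
  then show "is_seed C s z" unfolding is_seed_def
    using s anc_in_branch[OF assms(2) _ assms(4)] by blast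
qed

lemma chain_max:
  assumes "finite S" "S \<noteq> {}" "\<And>x y. x \<in> S \<Longrightarrow> y \<in> S \<Longrightarrow> anc C x y \<or> anc C y x"
  shows "\<exists>z\<in>S. \<forall>w\<in>S. anc C w z"
  using assms
proof (induction S rule: finite_ne_induct)
  case (singleton x) then show ?case using anc_refl by blast
next
  case (insert x F)
  then obtain z where z: "z \<in> F" "\<forall>w\<in>F. anc C w z" by blast
  from insert.prems[of x z] z(1) have "anc C x z \<or> anc C z x" by blast
  then show ?case
  proof
    assume "anc C x z" then show ?thesis using z by blast
  next
    assume "anc C z x" then show ?thesis using z anc_refl[of C x] anc_trans[of C _ z x] by blast
  qed
qed

lemma post_bal:
  assumes "split_comp C" "b \<in> blocks C" "b \<notin> pre C" "is_seed C s b"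
  shows "0 \<le> share C s (side C b) a + (\<Sum>y\<in>{y. anc C y b} - pre C. delta C y a)"
proof -
  have "(genesis C, b) \<in> (edges C)\<^sup>*" using sc3[OF assms(1,2)] by (simp add: anc_def)
  then show ?thesis using assms(2-4)
  proof (induction rule: rtrancl_induct)
    case base then show ?case using sc7[OF assms(1)] by blast
  next
    case (step y z)
    have z: "z \<noteq> genesis C" "y = parent C z" using step(2) by (auto simp: edge_iff)
    have set: "{w. anc C w z} - pre C = insert z ({w. anc C w y} - pre C)"
      using anc_set(1)[OF assms(1) step(4) z(1)] z(2) step(5) by auto
    have nin: "z \<notin> {w. anc C w y} - pre C" using anc_set(2)[OF assms(1) step(4) z(1)] z(2) by auto
    have yb: "y \<in> blocks C" using sc2[OF assms(1) step(4) z(1)] z(2) by simp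
    have fin: "finite ({w. anc C w y} - pre C)" using anc_finite[OF assms(1) yb] by auto
    have sum: "(\<Sum>w\<in>{w. anc C w z} - pre C. delta C w a) = delta C z a + (\<Sum>w\<in>{w. anc C w y} - pre C. delta C w a)"
      unfolding set using nin fin by simp
    have sd: "side C z \<in> {1,2}" using sc9[OF assms(1) step(4,5)] .
    have shnn: "0 \<le> share C s (side C z) a" using sc12[OF assms(1) step(4,5,6), of a] sd by auto
    have rest: "0 \<le> share C s (side C z) a + (\<Sum>w\<in>{w. anc C w y} - pre C. delta C w a)"
    proof (cases "y \<in> pre C")
      case True
      then have "{w. anc C w y} - pre C = {}" using anc_in_pre[OF assms(1) _ True] by blast
      then show ?thesis using shnn by (simp only: sum.empty)
    next
      case False
      have side: "side C y = side C z" using sc10[OF assms(1) step(4,5)] z(2) False by auto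
      have sp: "s \<in> pre C" "anc C s z" "\<And>w. anc C w z \<Longrightarrow> w \<in> pre C \<Longrightarrow> anc C w s"
        using step(6) unfolding is_seed_def by blast+
      have "anc C s y" using anc_back[OF sp(2)] sp(1) step(5) z(2) by auto
      moreover have "\<And>w. anc C w y \<Longrightarrow> w \<in> pre C \<Longrightarrow> anc C w s"
        using sp(3) anc_trans[OF _ anc_parent[OF step(4) z(1)]] z(2) by blast
      ultimately have "is_seed C s y" unfolding is_seed_def using sp(1) by blast
      then show ?thesis using step.IH yb False side by simp
    qed
    show ?case
    proof (cases "src C z = a")
      case True then show ?thesis using sc13[OF assms(1) step(4,5,6)] by simp
    next
      case False
      have "0 \<le> delta C z a" using False sc4[OF assms(1) step(4) z(1)] by (simp add: delta_def)
      then show ?thesis using sum rest by linarith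
    qed
  qed
qed


lemma pred_anc:
  assumes "is_branch C B" "\<forall>u\<in>B. \<forall>v\<in>B. anc C u v \<and> u \<noteq> v \<longrightarrow> (u, v) \<in> R"
    "trans R" "irrefl R" "y \<in> B" "x \<in> B" "(y, x) \<in> R"
  shows "anc C y x"
proof -
  from branch_chain[OF assms(1,5,6)] show ?thesis
  proof
    assume h: "anc C x y"
    show ?thesis
    proof (cases "x = y")
      case True then show ?thesis using anc_refl by simp
    next
      case False
      then have "(x, y) \<in> R" using assms(2,5,6) h by blast
      then have "(x, x) \<in> R" using assms(3,7) by (meson transD)
      then show ?thesis using assms(4) by (simp add: irrefl_def)
    qed
  qed
qed

lemma side_ok:
  assumes sc: "split_comp C" and br1: "is_branch C B1" and br2: "is_branch C B2"
    and mp1: "mined_in_partition C p1 B1" and mp2: "mined_in_partition C p2 B2" and p: "p1 \<noteq> p2"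
    and bs1: "branch_seed C B1 s" and bs2: "branch_seed C B2 s"
    and M: "is_branch_merge C B1 B2 R" and x: "x \<in> B1" "x \<noteq> genesis C"
  shows "0 \<le> merge_bal C R x (src C x)"
proof -
  define a where "a = src C x"
  have Rsub: "R \<subseteq> (B1 \<union> B2) \<times> (B1 \<union> B2)" using M unfolding is_branch_merge_def by blast
  have Rtr: "trans R" using M unfolding is_branch_merge_def by blast
  have Rirr: "irrefl R" using M unfolding is_branch_merge_def by blast
  have R1: "\<forall>u\<in>B1. \<forall>v\<in>B1. anc C u v \<and> u \<noteq> v \<longrightarrow> (u, v) \<in> R" using M unfolding is_branch_merge_def by blast
  have R2: "\<forall>u\<in>B2. \<forall>v\<in>B2. anc C u v \<and> u \<noteq> v \<longrightarrow> (u, v) \<in> R" using M unfolding is_branch_merge_def by blast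
  have Rfin: "finite {y. (y, x) \<in> R}" using M unfolding is_branch_merge_def by blast
  have s1: "s \<in> B1" "s \<in> pre C" "\<And>y. y \<in> B1 \<Longrightarrow> y \<in> pre C \<Longrightarrow> anc C y s"
    using bs1 unfolding branch_seed_def by blast+
  have s2: "s \<in> B2" "\<And>y. y \<in> B2 \<Longrightarrow> y \<in> pre C \<Longrightarrow> anc C y s"
    using bs2 unfolding branch_seed_def by blast+
  have xb: "x \<in> blocks C" using branch_blocks[OF br1] x(1) by blast
  define A where "A = {y. anc C y x}"
  define P where "P = {y. (y, x) \<in> R}"
  have finA: "finite A" unfolding A_def using anc_finite[OF sc xb] .
  have finP: "finite P" unfolding P_def using Rfin .
  have AB1: "\<And>y. y \<in> A \<Longrightarrow> y \<in> B1" unfolding A_def using anc_in_branch[OF br1 _ x(1)] by blast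
  have AP: "\<And>y. y \<in> A \<Longrightarrow> y \<noteq> x \<Longrightarrow> y \<in> P" unfolding P_def A_def using R1 AB1[unfolded A_def] x(1) by blast
  have PB: "\<And>y. y \<in> P \<Longrightarrow> y \<in> B1 \<or> y \<in> B2" unfolding P_def using Rsub by blast
  have P1: "\<And>y. y \<in> P \<Longrightarrow> y \<in> B1 \<Longrightarrow> y \<in> A"
    unfolding P_def A_def using pred_anc[OF br1 R1 Rtr Rirr _ x(1)] by blast
  have xA: "x \<in> A" unfolding A_def using anc_refl by simp
  show ?thesis
  proof (cases "x \<in> pre C")
    case True
    have xB2: "x \<in> B2" using anc_in_branch[OF br2 s1(3)[OF x(1) True] s2(1)] .
    have P2: "\<And>y. y \<in> P \<Longrightarrow> y \<in> B2 \<Longrightarrow> y \<in> A"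
      unfolding P_def A_def using pred_anc[OF br2 R2 Rtr Rirr _ xB2] by blast
    have eq: "insert x P = A" using AP PB P1 P2 xA by blast
    have "merge_bal C R x a = bal C x a"
      unfolding merge_bal_def bal_def using eq unfolding P_def A_def by simp
    then show ?thesis using sc11[OF sc True x(2)] unfolding a_def by simp
  next
    case False
    define S2 where "S2 = {y \<in> B2 - pre C. (y, x) \<in> R}"
    have seed1: "is_seed C s x" "anc C s x" using seed_of[OF sc br1 bs1 x(1) False] by auto
    have preA: "\<And>y. anc C y s \<Longrightarrow> y \<in> A" unfolding A_def using anc_trans[OF _ seed1(2)] by blast
    have eq: "insert x P - {genesis C} = (A - {genesis C}) \<union> S2"
    proof
      show "insert x P - {genesis C} \<subseteq> A - {genesis C} \<union> S2"
      proof
        fix y assume y: "y \<in> insert x P - {genesis C}"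
        show "y \<in> A - {genesis C} \<union> S2"
        proof (cases "y = x")
          case True then show ?thesis using y xA by blast
        next
          case False
          then have yP: "y \<in> P" using y by blast
          show ?thesis
          proof (cases "y \<in> B1")
            case True then show ?thesis using P1 yP y by blast
          next
            case False
            then have yB2: "y \<in> B2" using PB yP by blast
            show ?thesis
            proof (cases "y \<in> pre C")
              case True then show ?thesis using preA s2(2)[OF yB2 True] y by blast
            next
              case False then show ?thesis using yB2 yP unfolding S2_def P_def by blast
            qed
          qed
        qed
      qed
      show "A - {genesis C} \<union> S2 \<subseteq> insert x P - {genesis C}"
        using AP unfolding S2_def P_def using sc7[OF sc] by blast
    qed
    have side1: "side C x = p1" using mp1 x(1) False unfolding mined_in_partition_def by blast
    have disj: "(A - {genesis C}) \<inter> S2 = {}"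
    proof (rule ccontr)
      assume "(A - {genesis C}) \<inter> S2 \<noteq> {}"
      then obtain y where y: "y \<in> A" "y \<in> B2" "y \<notin> pre C" unfolding S2_def by blast
      have "side C y = p1" using mp1 AB1[OF y(1)] y(3) unfolding mined_in_partition_def by blast
      moreover have "side C y = p2" using mp2 y(2,3) unfolding mined_in_partition_def by blast
      ultimately show False using p by simp
    qed
    have Aeq: "A - {genesis C} = ({y. anc C y s} - {genesis C}) \<union> (A - pre C)"
    proof
      show "A - {genesis C} \<subseteq> ({y. anc C y s} - {genesis C}) \<union> (A - pre C)"
        using s1(3) AB1 by blast
      show "({y. anc C y s} - {genesis C}) \<union> (A - pre C) \<subseteq> A - {genesis C}"
        using preA sc7[OF sc] by blast
    qed
    have Adisj: "({y. anc C y s} - {genesis C}) \<inter> (A - pre C) = {}"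
      using anc_in_pre[OF sc _ s1(2)] by blast
    have "S2 \<subseteq> P" unfolding S2_def P_def by blast
    then have finS2: "finite S2" using finite_subset finP by auto
    have "s \<in> blocks C" using s1(2) sc6[OF sc] by blast
    then have finS: "finite ({y. anc C y s} - {genesis C})"
      using anc_finite[OF sc] by simp
    have finA2: "finite (A - pre C)" using finA by simp
    have mb: "merge_bal C R x a = bal C s a + (\<Sum>y\<in>A - pre C. delta C y a) + (\<Sum>y\<in>S2. delta C y a)"
    proof -
      have "merge_bal C R x a = init C a + (\<Sum>y\<in>insert x P - {genesis C}. delta C y a)"
        unfolding merge_bal_def P_def by simp
      also have "(\<Sum>y\<in>insert x P - {genesis C}. delta C y a) = (\<Sum>y\<in>A - {genesis C}. delta C y a) + (\<Sum>y\<in>S2. delta C y a)"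
        unfolding eq using finA by (intro sum.union_disjoint[OF _ finS2 disj]) simp
      also have "(\<Sum>y\<in>A - {genesis C}. delta C y a) = (\<Sum>y\<in>{y. anc C y s} - {genesis C}. delta C y a) + (\<Sum>y\<in>A - pre C. delta C y a)"
        unfolding Aeq using sum.union_disjoint[OF finS finA2 Adisj] .
      finally show ?thesis unfolding bal_def by simp
    qed
    obtain b1 where b1: "b1 \<in> B1" "b1 \<notin> pre C" "side C b1 = p1" using mp1 unfolding mined_in_partition_def by blast
    obtain b2 where b2: "b2 \<in> B2" "b2 \<notin> pre C" "side C b2 = p2" using mp2 unfolding mined_in_partition_def by blast
    have p1in: "p1 \<in> {1,2}" using sc9[OF sc _ b1(2)] b1 branch_blocks[OF br1] by blast
    have p2in: "p2 \<in> {1,2}" using sc9[OF sc _ b2(2)] b2 branch_blocks[OF br2] by blast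
    have shs: "0 \<le> share C s 1 a \<and> 0 \<le> share C s 2 a \<and> share C s 1 a + share C s 2 a = bal C s a"
      using sc12[OF sc xb False seed1(1)] .
    have shares: "bal C s a = share C s p1 a + share C s p2 a" "0 \<le> share C s p2 a"
      using shs p1in p2in p by auto
    have v1: "0 \<le> share C s p1 a + (\<Sum>y\<in>A - pre C. delta C y a)"
      using sc13[OF sc xb False seed1(1)] side1 unfolding a_def A_def by simp
    have v2: "0 \<le> share C s p2 a + (\<Sum>y\<in>S2. delta C y a)"
    proof (cases "S2 = {}")
      case True then show ?thesis using shares(2) by (simp only: sum.empty)
    next
      case False
      have ch: "\<And>u v. u \<in> S2 \<Longrightarrow> v \<in> S2 \<Longrightarrow> anc C u v \<or> anc C v u"
        using branch_chain[OF br2] unfolding S2_def by blast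
      obtain z where z: "z \<in> S2" "\<forall>w\<in>S2. anc C w z" using chain_max[OF finS2 False ch] by blast
      have zB: "z \<in> B2" "z \<notin> pre C" "(z, x) \<in> R" using z(1) unfolding S2_def by blast+
      have "S2 = {y. anc C y z} - pre C"
      proof
        show "S2 \<subseteq> {y. anc C y z} - pre C" using z(2) unfolding S2_def by blast
        show "{y. anc C y z} - pre C \<subseteq> S2"
        proof
          fix w assume w: "w \<in> {y. anc C y z} - pre C"
          have wB: "w \<in> B2" using anc_in_branch[OF br2 _ zB(1)] w by blast
          show "w \<in> S2"
          proof (cases "w = z")
            case True then show ?thesis using z(1) by simp
          next
            case False
            then have "(w, z) \<in> R" using R2 wB zB(1) w by blast
            then have "(w, x) \<in> R" using zB(3) Rtr by (meson transD)
            then show ?thesis using wB w unfolding S2_def by blast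
          qed
        qed
      qed
      moreover have "side C z = p2" using mp2 zB unfolding mined_in_partition_def by blast
      moreover have "is_seed C s z" using seed_of[OF sc br2 bs2 zB(1,2)] by blast
      moreover have "z \<in> blocks C" using branch_blocks[OF br2] zB(1) by blast
      ultimately show ?thesis using post_bal[OF sc _ zB(2), where a=a] by simp
    qed
    show ?thesis using mb shares(1) v1 v2 unfolding a_def by linarith
  qed
qed


lemma merge_sym: "is_branch_merge C B1 B2 R \<Longrightarrow> is_branch_merge C B2 B1 R"
  unfolding is_branch_merge_def by (simp add: Un_commute)

theorem proposition1:
  fixes C :: "('b, 'a) comp" and B1 B2 :: "'b set" and p1 p2 :: nat and s :: 'b
  assumes "split_comp C"
    and "is_branch C B1" and "is_branch C B2"
    and "p1 \<noteq> p2"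
    and "mined_in_partition C p1 B1" and "mined_in_partition C p2 B2"
    and "branch_seed C B1 s" and "branch_seed C B2 s"
  shows "mergeable C B1 B2"
proof -
  have s1: "s \<in> B1" "s \<in> pre C" "\<And>y. y \<in> B1 \<Longrightarrow> y \<in> pre C \<Longrightarrow> anc C y s"
    using assms(7) unfolding branch_seed_def by blast+
  have s2: "s \<in> B2" "\<And>y. y \<in> B2 \<Longrightarrow> y \<in> pre C \<Longrightarrow> anc C y s"
    using assms(8) unfolding branch_seed_def by blast+
  have part1: "\<forall>t \<in> pre C - {genesis C}. t \<in> B1 \<longleftrightarrow> t \<in> B2"
  proof
    fix t assume t: "t \<in> pre C - {genesis C}"
    show "t \<in> B1 \<longleftrightarrow> t \<in> B2"
    proof
      assume "t \<in> B1"
      then show "t \<in> B2" using anc_in_branch[OF assms(3) s1(3) s2(1)] t by blast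
    next
      assume "t \<in> B2"
      then show "t \<in> B1" using anc_in_branch[OF assms(2) s2(2) s1(1)] t by blast
    qed
  qed
  have part2: "\<forall>R. is_branch_merge C B1 B2 R \<longrightarrow>
        (\<forall>x \<in> (B1 \<union> B2) - {genesis C}. 0 \<le> merge_bal C R x (src C x))"
  proof (intro allI impI ballI)
    fix R x assume M: "is_branch_merge C B1 B2 R" and x: "x \<in> (B1 \<union> B2) - {genesis C}"
    show "0 \<le> merge_bal C R x (src C x)"
    proof (cases "x \<in> B1")
      case True
      then show ?thesis using side_ok[OF assms(1,2,3,5,6,4,7,8) M True] x by blast
    next
      case False
      then have "x \<in> B2" using x by blast
      moreover have "p2 \<noteq> p1" using assms(4) by simp
      ultimately show ?thesis using side_ok[OF assms(1,3,2,6,5) _ assms(8,7) merge_sym[OF M]] x by blast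
    qed
  qed
  show ?thesis unfolding mergeable_def using part1 part2 by blast
qed

end
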